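(* Let $\mathbf W\in\mathbb R^{p\times d}$ and let $\sigma_1,\ldots,\sigma_p\in C^{0,1}_{\uparrow}(\mathbb R)$. Let $L_\theta$ denote the Lipschitz constant of $\mathbf x\mapsto\mathbf W^T\boldsymbol\sigma(\mathbf W\mathbf x)$, where $(\boldsymbol\sigma(\mathbf z))_i=\sigma_i(z_i)$. With $\boldsymbol\Sigma_\infty=\mathrm{diag}(\|\sigma_1'\|_\infty,\ldots,\|\sigma_p'\|_\infty)$ it holds that $$L_\theta\le\|\mathbf W^T\boldsymbol\Sigma_\infty\mathbf W\|=\|\sqrt{\boldsymbol\Sigma_\infty}\,\mathbf W\|^2\le L_{\boldsymbol\sigma}\|\mathbf W\|^2,$$ where $L_{\boldsymbol\sigma}=\max_i\mathrm{Lip}(\sigma_i)$ is the Lipschitz constant of $\boldsymbol\sigma$ and $\|\cdot\|$ is the spectral norm.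
   Context: $C^{0,1}_{\uparrow}(\mathbb R)$ denotes the set of Lipschitz-continuous increasing functions $\mathbb R\to\mathbb R$; for such $\sigma_i$, $\|\sigma_i'\|_\infty$ is the essential supremum of its derivative, i.e. its Lipschitz constant. *)

theory Defs
  imports "HOL-Analysis.Analysis"
begin

definition lip_const :: "('a::metric_space \<Rightarrow> 'b::metric_space) \<Rightarrow> real" where
  "lip_const f = Inf {L. L-lipschitz_on UNIV f}"

definition act_vec :: "('p::finite \<Rightarrow> real \<Rightarrow> real) \<Rightarrow> real^'p \<Rightarrow> real^'p" where
  "act_vec \<sigma> z = (\<chi> i. \<sigma> i (z $ i))"

definition diag_mat :: "('p::finite \<Rightarrow> real) \<Rightarrow> real^'p^'p" where
  "diag_mat c = (\<chi> i j. if i = j then c i else 0)"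

definition spec_norm :: "real^'n::finite^'m::finite \<Rightarrow> real" where
  "spec_norm A = onorm (\<lambda>x. A *v x)"

end

theory Submission imports Defs begin

lemma tr_inner: "inner (transpose A *v u) v = inner u ((A::real^'n^'m) *v v)"
  by (metis dot_lmul_matrix transpose_transpose vector_transpose_matrix)

lemma sn_bound: "norm ((A::real^'n::finite^'m::finite) *v x) \<le> spec_norm A * norm x"
  unfolding spec_norm_def by (rule onorm) simp

lemma sn_nonneg: "0 \<le> spec_norm (A::real^'n::finite^'m::finite)"
  unfolding spec_norm_def by (rule onorm_pos_le) simp

lemma sn_le: assumes "\<And>x. norm ((A::real^'n::finite^'m::finite) *v x) \<le> b * norm x"
  shows "spec_norm A \<le> b"
  unfolding spec_norm_def by (rule onorm_le) (use assms in auto)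

lemma sn_transpose_le: "spec_norm (transpose (A::real^'n::finite^'m::finite)) \<le> spec_norm A"
proof (rule sn_le)
  fix u
  let ?w = "transpose A *v u"
  have "norm ?w ^ 2 = inner ?w ?w" by (simp add: power2_norm_eq_inner)
  also have "\<dots> = inner u (A *v ?w)" by (rule tr_inner)
  also have "\<dots> \<le> norm u * norm (A *v ?w)" by (rule norm_cauchy_schwarz)
  also have "\<dots> \<le> norm u * (spec_norm A * norm ?w)"
    by (rule mult_left_mono[OF sn_bound]) simp
  finally have h: "norm ?w * norm ?w \<le> (spec_norm A * norm u) * norm ?w"
    by (simp add: power2_eq_square algebra_simps)
  show "norm ?w \<le> spec_norm A * norm u"
  proof (cases "norm ?w = 0")
    case True then show ?thesis using sn_nonneg[of A] by simp
  next
    case False then have "norm ?w > 0" by simp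
    with h show ?thesis by simp
  qed
qed

lemma sn_transpose: "spec_norm (transpose (A::real^'n::finite^'m::finite)) = spec_norm A"
  using sn_transpose_le[of A] sn_transpose_le[of "transpose A"] by simp

lemma sn_gram: "spec_norm (transpose A ** (A::real^'n::finite^'m::finite)) = (spec_norm A)\<^sup>2"
proof (rule antisym)
  show "spec_norm (transpose A ** A) \<le> (spec_norm A)\<^sup>2"
  proof (rule sn_le)
    fix x
    have "norm ((transpose A ** A) *v x) = norm (transpose A *v (A *v x))"
      by (simp add: matrix_vector_mul_assoc)
    also have "\<dots> \<le> spec_norm A * norm (A *v x)" using sn_bound[of "transpose A"] sn_transpose by metis
    also have "\<dots> \<le> spec_norm A * (spec_norm A * norm x)"
      by (rule mult_left_mono[OF sn_bound sn_nonneg])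
    finally show "norm ((transpose A ** A) *v x) \<le> (spec_norm A)\<^sup>2 * norm x"
      by (simp add: power2_eq_square algebra_simps)
  qed
next
  let ?G = "transpose A ** A"
  have "spec_norm A \<le> sqrt (spec_norm ?G)"
  proof (rule sn_le)
    fix x
    have "norm (A *v x) ^ 2 = inner (A *v x) (A *v x)" by (simp add: power2_norm_eq_inner)
    also have "\<dots> = inner (transpose A *v (A *v x)) x" using tr_inner[of A "A *v x" x]
      by (simp add: inner_commute)
    also have "\<dots> = inner (?G *v x) x" by (simp add: matrix_vector_mul_assoc)
    also have "\<dots> \<le> norm (?G *v x) * norm x" by (rule norm_cauchy_schwarz)
    also have "\<dots> \<le> spec_norm ?G * norm x * norm x"
      by (rule mult_right_mono[OF sn_bound]) simp
    finally have "norm (A *v x) ^ 2 \<le> (sqrt (spec_norm ?G) * norm x) ^ 2"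
      using sn_nonneg[of ?G] by (simp add: power_mult_distrib real_sqrt_pow2 power2_eq_square[symmetric] mult.assoc)
    then show "norm (A *v x) \<le> sqrt (spec_norm ?G) * norm x"
      using sn_nonneg[of ?G] by (meson norm_ge_zero power2_le_imp_le real_sqrt_ge_zero zero_le_mult_iff)
  qed
  then have "(spec_norm A)^2 \<le> (sqrt (spec_norm ?G))^2"
    using sn_nonneg[of A] by (rule power_mono)
  then show "(spec_norm A)\<^sup>2 \<le> spec_norm ?G" using sn_nonneg[of ?G] by simp
qed


lemma lc_bound:
  fixes f :: "real \<Rightarrow> real"
  assumes "\<exists>L. L-lipschitz_on UNIV f"
  shows "0 \<le> lip_const f" "\<bar>f a - f b\<bar> \<le> lip_const f * \<bar>a - b\<bar>"
proof -
  let ?S = "{L. L-lipschitz_on UNIV f}"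
  have ne: "?S \<noteq> {}" using assms by auto
  show "0 \<le> lip_const f" unfolding lip_const_def
    by (rule cInf_greatest[OF ne]) (auto intro: lipschitz_on_nonneg)
  show "\<bar>f a - f b\<bar> \<le> lip_const f * \<bar>a - b\<bar>"
  proof (cases "a = b")
    case True then show ?thesis by simp
  next
    case False
    then have p: "\<bar>a - b\<bar> > 0" by simp
    have "\<bar>f a - f b\<bar> / \<bar>a - b\<bar> \<le> lip_const f" unfolding lip_const_def
    proof (rule cInf_greatest[OF ne])
      fix L assume "L \<in> ?S"
      then have "dist (f a) (f b) \<le> L * dist a b" by (auto intro: lipschitz_onD)
      then show "\<bar>f a - f b\<bar> / \<bar>a - b\<bar> \<le> L" using p by (simp add: dist_real_def divide_simps)
    qed
    then show ?thesis using p by (simp add: divide_simps)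
  qed
qed

lemma lc_le:
  assumes "K-lipschitz_on UNIV g"
  shows "lip_const g \<le> K"
  unfolding lip_const_def
  by (rule cInf_lower) (use assms in \<open>auto intro: lipschitz_on_nonneg simp: bdd_below_def\<close>)

lemma diag_sum: fixes i j :: "'p::finite" shows "(\<Sum>k\<in>UNIV. (if i = k then a i else 0) * (if k = j then b k else (0::real)))
      = (if i = j then a i * b i else 0)"
proof -
  have "(\<Sum>k\<in>UNIV. (if i = k then a i else 0) * (if k = j then b k else 0))
      = (\<Sum>k\<in>UNIV. if k = i then (if i = j then a i * b i else 0) else 0)"
    by (rule sum.cong) auto
  then show ?thesis by (cases "i = j") simp_all
qed

lemma diag_mul: "diag_mat a ** diag_mat b = diag_mat (\<lambda>i. a i * b i)"
  unfolding diag_mat_def matrix_matrix_mult_def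
  by (simp add: vec_eq_iff diag_sum)

lemma diag_tr: "transpose (diag_mat a) = diag_mat a"
  unfolding diag_mat_def transpose_def by (simp add: vec_eq_iff)

lemma diag_vec: "(diag_mat c *v x) $ i = c i * x $ i"
proof -
  have "(\<Sum>j\<in>UNIV. (if i = j then c i else 0) * x $ j) = (\<Sum>j\<in>UNIV. if j = i then c i * x $ i else 0)"
    by (rule sum.cong) auto
  then show ?thesis unfolding diag_mat_def matrix_vector_mult_def by simp
qed

lemma diag_gram: assumes "\<And>i. 0 \<le> c i"
  shows "diag_mat c = transpose (diag_mat (\<lambda>i. sqrt (c i))) ** diag_mat (\<lambda>i. sqrt (c i))"
  using assms by (simp add: diag_tr diag_mul)

theorem proposition5:
  fixes W :: "real^'d::finite^'p::finite"
    and \<sigma> :: "'p \<Rightarrow> real \<Rightarrow> real"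
  assumes mono: "\<And>i. mono (\<sigma> i)"
    and lip: "\<And>i. \<exists>L. L-lipschitz_on UNIV (\<sigma> i)"
  defines "Sigma_inf \<equiv> diag_mat (\<lambda>i. lip_const (\<sigma> i))"
    and "L_theta \<equiv> lip_const (\<lambda>x::real^'d. transpose W *v act_vec \<sigma> (W *v x))"
    and "L_sigma \<equiv> Max (range (\<lambda>i. lip_const (\<sigma> i)))"
  shows "L_theta \<le> spec_norm (transpose W ** Sigma_inf ** W)
    \<and> spec_norm (transpose W ** Sigma_inf ** W)
        = (spec_norm (diag_mat (\<lambda>i. sqrt (lip_const (\<sigma> i))) ** W))\<^sup>2
    \<and> (spec_norm (diag_mat (\<lambda>i. sqrt (lip_const (\<sigma> i))) ** W))\<^sup>2
        \<le> L_sigma * (spec_norm W)\<^sup>2"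
proof -
  define l where "l i = lip_const (\<sigma> i)" for i
  have l0: "0 \<le> l i" for i unfolding l_def by (rule lc_bound(1)[OF lip])
  have lb: "\<bar>\<sigma> i a - \<sigma> i b\<bar> \<le> l i * \<bar>a - b\<bar>" for i a b unfolding l_def by (rule lc_bound(2)[OF lip])
  define S where "S = diag_mat (\<lambda>i. sqrt (l i))"
  define M where "M = S ** W"
  have Sig: "Sigma_inf = transpose S ** S" unfolding Sigma_inf_def S_def l_def[symmetric]
    by (rule diag_gram[OF l0])
  have gramM: "transpose W ** Sigma_inf ** W = transpose M ** M"
    unfolding Sig M_def by (simp add: matrix_transpose_mul matrix_mul_assoc)
  have C2: "spec_norm (transpose W ** Sigma_inf ** W) = (spec_norm M)\<^sup>2"
    unfolding gramM by (rule sn_gram)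
  have C3: "(spec_norm M)\<^sup>2 \<le> L_sigma * (spec_norm W)\<^sup>2"
  proof -
    have lL: "l i \<le> L_sigma" for i unfolding L_sigma_def l_def by (rule Max_ge) auto
    have L0: "0 \<le> L_sigma" using l0[of undefined] lL[of undefined] by linarith
    have "spec_norm M \<le> sqrt L_sigma * spec_norm W"
    proof (rule sn_le)
      fix x
      have "norm (M *v x) \<le> norm (sqrt L_sigma *\<^sub>R (W *v x))"
      proof (rule norm_le_componentwise_cart)
        fix i
        have "sqrt (l i) \<le> sqrt L_sigma" using lL by simp
        then show "norm ((M *v x) $ i) \<le> norm ((sqrt L_sigma *\<^sub>R (W *v x)) $ i)"
          unfolding M_def S_def using l0[of i] L0 by (simp add: matrix_vector_mul_assoc[symmetric] diag_vec abs_mult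
              mult_right_mono)
      qed
      also have "\<dots> = sqrt L_sigma * norm (W *v x)" using L0 by simp
      also have "\<dots> \<le> sqrt L_sigma * (spec_norm W * norm x)"
        by (rule mult_left_mono[OF sn_bound]) (use L0 in simp)
      finally show "norm (M *v x) \<le> sqrt L_sigma * spec_norm W * norm x" by (simp add: mult.assoc)
    qed
    then have "(spec_norm M)\<^sup>2 \<le> (sqrt L_sigma * spec_norm W)\<^sup>2"
      using sn_nonneg[of M] by (rule power_mono)
    then show ?thesis using L0 by (simp add: power_mult_distrib)
  qed
  have C1: "L_theta \<le> (spec_norm M)\<^sup>2"
    unfolding L_theta_def
  proof (rule lc_le, rule lipschitz_onI)
    show "0 \<le> (spec_norm M)\<^sup>2" by simp
    fix x y :: "real^'d"
    define a where "a = W *v x"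
    define b where "b = W *v y"
    define d where "d i = (if a$i = b$i then 0 else (\<sigma> i (a$i) - \<sigma> i (b$i)) / (a$i - b$i))" for i
    have d0: "0 \<le> d i" for i
    proof (cases "a$i < b$i")
      case True
      then have "\<sigma> i (a$i) \<le> \<sigma> i (b$i)" using mono[of i] by (simp add: mono_def)
      then show ?thesis using True unfolding d_def by (simp add: divide_nonpos_neg)
    next
      case False
      then have "\<sigma> i (b$i) \<le> \<sigma> i (a$i)" using mono[of i] by (simp add: mono_def)
      then show ?thesis using False unfolding d_def by (simp add: divide_nonneg_pos)
    qed
    have dl: "d i \<le> l i" for i
    proof -
      have "d i \<le> \<bar>d i\<bar>" by simp
      also have "\<dots> \<le> l i" unfolding d_def using lb[of i "a$i" "b$i"] l0[of i]
        by (auto simp: abs_divide divide_simps)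
      finally show ?thesis .
    qed
    have dz: "\<sigma> i (a$i) - \<sigma> i (b$i) = d i * (a$i - b$i)" for i
      unfolding d_def by auto
    define D where "D = diag_mat (\<lambda>i. sqrt (d i))"
    define A where "A = D ** W"
    have act: "act_vec \<sigma> a - act_vec \<sigma> b = diag_mat d *v (a - b)"
      by (simp add: vec_eq_iff act_vec_def diag_vec dz)
    have dD: "diag_mat d = transpose D ** D" unfolding D_def by (rule diag_gram[OF d0])
    have eq: "transpose W *v act_vec \<sigma> a - transpose W *v act_vec \<sigma> b
       = transpose A *v (A *v (x - y))"
    proof -
      have ab: "a - b = W *v (x - y)" unfolding a_def b_def by (simp add: matrix_vector_mult_diff_distrib)
      have "transpose W *v act_vec \<sigma> a - transpose W *v act_vec \<sigma> b
          = transpose W *v (act_vec \<sigma> a - act_vec \<sigma> b)" by (simp add: matrix_vector_mult_diff_distrib)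
      also have "\<dots> = transpose W *v (transpose D *v (D *v (W *v (x - y))))"
        unfolding act dD ab by (simp add: matrix_vector_mul_assoc matrix_mul_assoc)
      also have "\<dots> = transpose A *v (A *v (x - y))"
        unfolding A_def by (simp add: matrix_transpose_mul matrix_vector_mul_assoc matrix_mul_assoc)
      finally show ?thesis .
    qed
    have AM: "norm (A *v w) \<le> norm (M *v w)" for w
    proof (rule norm_le_componentwise_cart)
      fix i
      have "sqrt (d i) \<le> sqrt (l i)" using dl by simp
      then show "norm ((A *v w) $ i) \<le> norm ((M *v w) $ i)"
        unfolding M_def S_def A_def D_def
        using l0[of i] d0[of i] by (simp add: matrix_vector_mul_assoc[symmetric] diag_vec abs_mult mult_right_mono)
    qed
    have sA: "spec_norm A \<le> spec_norm M"
      by (rule sn_le) (rule order_trans[OF AM sn_bound])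
    have "norm (transpose A *v (A *v (x - y))) \<le> spec_norm A * norm (A *v (x - y))"
      using sn_bound[of "transpose A"] sn_transpose by metis
    also have "\<dots> \<le> spec_norm M * (spec_norm M * norm (x - y))"
      by (rule mult_mono[OF sA order_trans[OF AM sn_bound] sn_nonneg norm_ge_zero])
    finally show "dist (transpose W *v act_vec \<sigma> (W *v x)) (transpose W *v act_vec \<sigma> (W *v y))
       \<le> (spec_norm M)\<^sup>2 * dist x y"
      using eq unfolding a_def b_def by (simp add: dist_norm power2_eq_square mult.assoc)
  qed
  show ?thesis using C1 C2 C3 unfolding M_def S_def l_def by simp
qed

end
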